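(* Let $0<q,r<\infty$ and let $u,v,w$ be weights on $(0,\infty)$. Let $\{x_k\}$ be the covering sequence associated with $u$ and $\mathcal Z$ its index set (as described in the context). Then $$\bigg( \int_0^{\infty} \bigg( \int_x^{\infty} \bigg( \int_t^{\infty} h \bigg)^q w(t)\,dt\bigg)^{r / q} u(x)\,dx \bigg)^{1/r} \approx \bigg\| \bigg\{ 2^{k / r} \bigg(\int_{x_k}^{x_{k+1}} \bigg( \int_s^{x_{k+1}} h \bigg)^q w(s)\,ds\bigg)^{ 1 / q} \bigg\} \bigg\|_{\ell^r(\mathcal Z)} + \bigg\| \bigg\{ \bigg( \int_{x_{k-1}}^{x_k} u(t) \sup_{t < s \le x_{k+1}} \bigg(\int_{x_k}^s w \bigg)^{r / q} \bigg( \int_s^{\infty} h\bigg)^r \,dt\bigg)^{1/r} \bigg\} \bigg\|_{\ell^r(\mathcal Z)}$$ with constants independent of $h\in\mathfrak M^+(0,\infty)$.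
   Context: $\mathfrak M^+(0,\infty)$: non-negative measurable functions on $(0,\infty)$. A weight is $v\in\mathfrak M^+(0,\infty)$ with $0<\int_0^x v<\infty$ for all $x>0$. Covering sequence: if $\int_0^\infty u=\infty$, $\{x_k\}_{k\in\mathbb Z}$ is the strictly increasing sequence with $\int_0^{x_k}u=2^k$, and $\mathcal Z=\mathbb Z$. If $\int_0^\infty u<\infty$, let $M\in\mathbb Z$ satisfy $2^M\le\int_0^\infty u<2^{M+1}$, let $\int_0^{x_k}u=2^k$ for $k\le M$, $x_{M+1}=\infty$, and $\mathcal Z=\{k\in\mathbb Z: k\le M\}$. For a sequence $\{a_k\}_{k\in\mathcal Z}$, $\|\{a_k\}\|_{\ell^r(\mathcal Z)}=(\sum_{k\in\mathcal Z}|a_k|^r)^{1/r}$. $A\approx B$ means two-sided inequality with constants depending only on $q,r$. *)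

theory Defs
  imports "HOL-Analysis.Analysis"
begin

definition intv :: "ereal \<Rightarrow> ereal \<Rightarrow> real set" where
  "intv a b = {t. a < ereal t \<and> ereal t < b}"

definition Int_ab :: "(real \<Rightarrow> ennreal) \<Rightarrow> ereal \<Rightarrow> ereal \<Rightarrow> ennreal" where
  "Int_ab f a b = (\<integral>\<^sup>+ t. f t * indicator (intv a b) t \<partial>lebesgue)"

definition epow :: "ennreal \<Rightarrow> real \<Rightarrow> ennreal" where
  "epow x p = (if x = \<infinity> then \<infinity> else ennreal (enn2real x powr p))"

definition weight :: "(real \<Rightarrow> ennreal) \<Rightarrow> bool" where
  "weight v \<longleftrightarrow> v \<in> borel_measurable lebesgue \<and>
     (\<forall>x>0. 0 < Int_ab v 0 (ereal x) \<and> Int_ab v 0 (ereal x) < \<infinity>)"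

definition covering_seq :: "(real \<Rightarrow> ennreal) \<Rightarrow> (int \<Rightarrow> ereal) \<Rightarrow> int set \<Rightarrow> bool" where
  "covering_seq u x Z \<longleftrightarrow>
     (if Int_ab u 0 \<infinity> = \<infinity>
      then Z = UNIV \<and> (\<forall>k. 0 < x k \<and> x k < \<infinity> \<and> Int_ab u 0 (x k) = ennreal (2 powr real_of_int k))
      else (\<exists>M::int. ennreal (2 powr real_of_int M) \<le> Int_ab u 0 \<infinity>
              \<and> Int_ab u 0 \<infinity> < ennreal (2 powr real_of_int (M + 1))
              \<and> Z = {..M}
              \<and> (\<forall>k\<le>M. 0 < x k \<and> x k < \<infinity> \<and> Int_ab u 0 (x k) = ennreal (2 powr real_of_int k))
              \<and> x (M + 1) = \<infinity>))"

definition lr_norm :: "real \<Rightarrow> int set \<Rightarrow> (int \<Rightarrow> ennreal) \<Rightarrow> ennreal" where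
  "lr_norm r Z a = epow (\<Sum>\<^sub>\<infinity> k\<in>Z. epow (a k) r) (1 / r)"

end

theory Submission
  imports Defs
begin


lemma epow_0[simp]: "p > 0 \<Longrightarrow> epow 0 p = 0"
  by (simp add: epow_def)

lemma epow_top[simp]: "epow \<infinity> p = \<infinity>"
  by (simp add: epow_def)

lemma epow_ennreal: "c \<ge> 0 \<Longrightarrow> epow (ennreal c) p = ennreal (c powr p)"
  by (simp add: epow_def)

lemma epow_mono: assumes "p > 0" "a \<le> b" shows "epow a p \<le> epow b p"
proof (cases "b = \<infinity>")
  case True then show ?thesis by (simp add: epow_def)
next
  case False
  then have "a \<noteq> \<infinity>" using assms(2) by (auto simp: top_unique)
  then obtain x y where "a = ennreal x" "b = ennreal y" "x \<ge> 0" "y \<ge> 0"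
    using False by (metis ennreal_cases infinity_ennreal_def)
  then show ?thesis using assms
    by (auto simp: epow_def intro!: ennreal_leI powr_mono2)
qed

lemma epow_mult: assumes "p > 0" shows "epow (a * b) p = epow a p * epow b p"
proof (cases "a = 0 \<or> b = 0")
  case True then show ?thesis using assms by auto
next
  case False
  then show ?thesis using assms
    by (cases a rule: ennreal_cases; cases b rule: ennreal_cases)
       (auto simp: epow_def powr_mult ennreal_mult_eq_top_iff ennreal_top_mult ennreal_mult_top powr_gt_zero simp flip: ennreal_mult)
qed

lemma epow_epow: assumes "p > 0" "s > 0" shows "epow (epow a p) s = epow a (p * s)"
  using assms by (cases a) (auto simp: epow_def powr_powr)

lemma epow_1[simp]: "epow a 1 = a"
  by (cases a) (auto simp: epow_def)

lemma epow_inv: assumes "p > 0" shows "epow (epow a p) (1/p) = a"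
  using epow_epow[OF assms, of "1/p" a] assms by simp

lemma epow_inv': assumes "p > 0" shows "epow (epow a (1/p)) p = a"
  using epow_epow[of "1/p" p a] assms by simp

lemma epow_le_inv: assumes "p > 0" "epow a p \<le> c" shows "a \<le> epow c (1/p)"
  using epow_mono[of "1/p" "epow a p" c] assms epow_inv[OF assms(1)] by simp

lemma epow_add_le: assumes "p > 0"
  shows "epow (a + b) p \<le> ennreal (2 powr p) * (epow a p + epow b p)"
proof -
  have "a + b \<le> 2 * max a b"
    by (metis add_mono max.cobounded1 max.cobounded2 mult_2)
  then have "epow (a + b) p \<le> epow (2 * max a b) p" using epow_mono assms by blast
  also have "\<dots> = ennreal (2 powr p) * epow (max a b) p"
    using epow_mult[OF assms, of 2 "max a b"] epow_ennreal[of 2 p] by simp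
  also have "epow (max a b) p \<le> epow a p + epow b p"
    by (cases "a \<le> b") (auto simp: max_def)
  then have "ennreal (2 powr p) * epow (max a b) p \<le> ennreal (2 powr p) * (epow a p + epow b p)"
    by (rule mult_left_mono) simp
  finally show ?thesis .
qed

lemma epow_cmult: assumes "p > 0" "c \<ge> 0" shows "epow (ennreal c * a) p = ennreal (c powr p) * epow a p"
  using epow_mult[OF assms(1)] epow_ennreal[OF assms(2)] by simp



lemma intv_interval: "is_interval (intv a b)"
  unfolding is_interval_1 intv_def
proof (intro ballI allI impI, simp, elim conjE)
  fix x y z :: real
  assume "a < ereal x" "ereal x < b" "a < ereal y" "ereal y < b" "x \<le> z" "z \<le> y"
  then have "ereal x \<le> ereal z" "ereal z \<le> ereal y" by auto
  then show "a < ereal z \<and> ereal z < b"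
    using \<open>a < ereal x\<close> \<open>ereal y < b\<close> by (meson less_le_trans le_less_trans)
qed

lemma intv_borel[measurable]: "intv a b \<in> sets borel"
  by (rule real_interval_borel_measurable[OF intv_interval])

lemma borel_imp_lebesgue: "f \<in> borel_measurable borel \<Longrightarrow> f \<in> borel_measurable lebesgue"
proof -
  assume "f \<in> borel_measurable borel"
  then have "f \<in> borel_measurable lborel" by simp
  then show ?thesis by (rule measurable_completion)
qed

lemma intv_lebesgue[measurable]: "intv a b \<in> sets lebesgue"
  using intv_borel by (metis sets_completionI_sets sets_lborel)

lemma antimono_borel:
  fixes g :: "real \<Rightarrow> ennreal"
  assumes "\<And>s t. s \<le> t \<Longrightarrow> g t \<le> g s"
  shows "g \<in> borel_measurable lebesgue"
proof -
  have "g \<in> borel_measurable borel"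
  proof (rule borel_measurableI_greater)
    fix y
    have "is_interval {x. y < g x}"
      unfolding is_interval_1 using assms by (auto intro: less_le_trans)
    then show "{x \<in> space borel. y < g x} \<in> sets borel"
      using real_interval_borel_measurable by simp
  qed
  then show ?thesis by (rule borel_imp_lebesgue)
qed

lemma Int_ab_mono: "(\<And>t. t \<in> intv a b \<Longrightarrow> f t \<le> g t) \<Longrightarrow> Int_ab f a b \<le> Int_ab g a b"
  unfolding Int_ab_def by (intro nn_integral_mono) (auto split: split_indicator)

lemma Int_ab_subset: "a' \<le> a \<Longrightarrow> b \<le> b' \<Longrightarrow> Int_ab f a b \<le> Int_ab f a' b'"
  unfolding Int_ab_def
  by (intro nn_integral_mono) (auto split: split_indicator simp: intv_def intro: le_less_trans less_le_trans)

lemma Int_ab_empty: "b \<le> a \<Longrightarrow> Int_ab f a b = 0"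
proof -
  assume "b \<le> a"
  then have "(\<lambda>t. f t * indicator (intv a b) t) = (\<lambda>_. 0)"
    by (auto simp: fun_eq_iff intv_def split: split_indicator dest: less_trans le_less_trans)
  then show ?thesis unfolding Int_ab_def by simp
qed

lemma Int_ab_cmult: "f \<in> borel_measurable lebesgue \<Longrightarrow> Int_ab (\<lambda>t. c * f t) a b = c * Int_ab f a b"
  unfolding Int_ab_def by (subst nn_integral_cmult[symmetric]) (auto simp: mult.assoc)

lemma Int_ab_multc: "f \<in> borel_measurable lebesgue \<Longrightarrow> Int_ab (\<lambda>t. f t * c) a b = Int_ab f a b * c"
  using Int_ab_cmult[of f c a b] by (simp add: mult.commute)

lemma Int_ab_add: "f \<in> borel_measurable lebesgue \<Longrightarrow> g \<in> borel_measurable lebesgue \<Longrightarrow>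
   Int_ab (\<lambda>t. f t + g t) a b = Int_ab f a b + Int_ab g a b"
  unfolding Int_ab_def by (subst nn_integral_add[symmetric]) (auto simp: distrib_right)

lemma AE_lebesgue_neq: "AE x in lebesgue. x \<noteq> (c::real)"
  using AE_completion[OF AE_lborel_singleton[of c]] by simp

lemma Int_ab_split:
  assumes f: "f \<in> borel_measurable lebesgue" and "a \<le> ereal c" "ereal c \<le> b"
  shows "Int_ab f a b = Int_ab f a (ereal c) + Int_ab f (ereal c) b"
proof -
  have "Int_ab f a b = (\<integral>\<^sup>+ t. f t * indicator (intv a (ereal c)) t + f t * indicator (intv (ereal c) b) t \<partial>lebesgue)"
    unfolding Int_ab_def
  proof (rule nn_integral_cong_AE)
    show "AE x in lebesgue. f x * indicator (intv a b) x =
        f x * indicator (intv a (ereal c)) x + f x * indicator (intv (ereal c) b) x"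
      using AE_lebesgue_neq[of c]
    proof eventually_elim
      case (elim x)
      have 1: "a < ereal x \<Longrightarrow> ereal x < ereal c \<Longrightarrow> ereal x < b" using assms(3) by (meson less_le_trans)
      have 2: "ereal c < ereal x \<Longrightarrow> a < ereal x" using assms(2) by (meson le_less_trans)
      have 3: "a < ereal x \<Longrightarrow> ereal x < b \<Longrightarrow> x \<noteq> c \<Longrightarrow> ereal x < ereal c \<or> ereal c < ereal x" by auto
      show ?case using elim 1 2 3
        by (auto split: split_indicator simp: intv_def)
    qed
  qed
  also have "\<dots> = Int_ab f a (ereal c) + Int_ab f (ereal c) b"
    unfolding Int_ab_def using f by (intro nn_integral_add) auto
  finally show ?thesis .
qed



lemma cs_elem_le: "j \<in> A \<Longrightarrow> (f j :: ennreal) \<le> (\<integral>\<^sup>+k. f k \<partial>count_space A)"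
proof -
  assume j: "j \<in> A"
  have "(\<integral>\<^sup>+k. f k * indicator {j} k \<partial>count_space A) = (\<Sum>k\<in>{j}. f k * indicator {j} k)"
    using j by (intro nn_integral_count_space') auto
  also have "\<dots> = f j" by simp
  finally have "f j = (\<integral>\<^sup>+k. f k * indicator {j} k \<partial>count_space A)" by simp
  also have "\<dots> \<le> (\<integral>\<^sup>+k. f k \<partial>count_space A)"
    by (intro nn_integral_mono) (auto split: split_indicator)
  finally show ?thesis .
qed

lemma cs_finite_le: "finite F \<Longrightarrow> F \<subseteq> A \<Longrightarrow> sum (f::_\<Rightarrow>ennreal) F \<le> (\<integral>\<^sup>+k. f k \<partial>count_space A)"
proof -
  assume F: "finite F" "F \<subseteq> A"
  have "(\<integral>\<^sup>+k. f k * indicator F k \<partial>count_space A) = (\<Sum>k\<in>F. f k * indicator F k)"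
    using F by (intro nn_integral_count_space') auto
  also have "\<dots> = sum f F" by (intro sum.cong) auto
  finally have "sum f F = (\<integral>\<^sup>+k. f k * indicator F k \<partial>count_space A)" by simp
  also have "\<dots> \<le> (\<integral>\<^sup>+k. f k \<partial>count_space A)"
    by (intro nn_integral_mono) (auto split: split_indicator)
  finally show ?thesis .
qed

lemma infsum_nn:
  fixes f :: "int \<Rightarrow> ennreal"
  shows "infsum f A = (\<integral>\<^sup>+k. f k \<partial>count_space A)"
proof (rule antisym)
  show "infsum f A \<le> (\<integral>\<^sup>+k. f k \<partial>count_space A)"
    by (subst nonneg_infsum_complete) (auto intro!: SUP_least cs_finite_le)
next
  have sup: "infsum f A = (SUP F\<in>{F. finite F \<and> F\<subseteq>A}. sum f F)"
    by (rule nonneg_infsum_complete) auto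
  show "(\<integral>\<^sup>+k. f k \<partial>count_space A) \<le> infsum f A"
  proof (cases "finite A")
    case True
    then show ?thesis unfolding sup
      by (subst nn_integral_count_space_finite[OF True]) (auto intro!: SUP_upper2[of A])
  next
    case False
    have cA: "countable A" by simp
    note * = bij_betw_from_nat_into[OF cA False]
    have "(\<integral>\<^sup>+k. f k \<partial>count_space A) = (\<integral>\<^sup>+n. f (from_nat_into A n) \<partial>count_space UNIV)"
      by (simp add: nn_integral_bij_count_space[symmetric, OF *])
    also have "\<dots> = (\<Sum>n. f (from_nat_into A n))"
      by (rule nn_integral_count_space_nat)
    also have "\<dots> = (SUP n. \<Sum>i<n. f (from_nat_into A i))"
      by (rule suminf_eq_SUP)
    also have "\<dots> \<le> infsum f A"
    proof (rule SUP_least)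
      fix n
      have inj: "inj_on (from_nat_into A) {..<n}"
        using * by (auto simp: bij_betw_def inj_on_def)
      have "(\<Sum>i<n. f (from_nat_into A i)) = sum f (from_nat_into A ` {..<n})"
        by (simp add: sum.reindex[OF inj])
      also have "\<dots> \<le> infsum f A" unfolding sup
        using * by (intro SUP_upper) (auto simp: bij_betw_def)
      finally show "(\<Sum>i<n. f (from_nat_into A i)) \<le> infsum f A" .
    qed
    finally show ?thesis .
  qed
qed



lemma geom_ennreal: "0 \<le> \<rho> \<Longrightarrow> \<rho> < 1 \<Longrightarrow> (\<Sum>n. ennreal (\<rho> ^ n)) = ennreal (1 / (1 - \<rho>))"
proof -
  assume "0 \<le> \<rho>" "\<rho> < 1"
  then have "(\<lambda>n. \<rho> ^ n) sums (1 / (1 - \<rho>))" by (intro geometric_sums) auto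
  then have "(\<lambda>n. ennreal (\<rho> ^ n)) sums ennreal (1 / (1 - \<rho>))"
    using \<open>0 \<le> \<rho>\<close> \<open>\<rho> < 1\<close> by (subst sums_ennreal) auto
  then show ?thesis by (simp add: sums_iff)
qed

lemma two_powr_neg: "0 < a \<Longrightarrow> 2 powr (-a) < (1::real)"
  using powr_less_mono[of "-a" 0 2] by simp

lemma geom_up:
  assumes "a > 0"
  shows "(\<integral>\<^sup>+j. ennreal (2 powr (-(a * real_of_int (j - k)))) \<partial>count_space {j. k \<le> j}) = ennreal (1 / (1 - 2 powr (-a)))"
proof -
  have bij: "bij_betw (\<lambda>n::nat. k + int n) UNIV {j. k \<le> j}"
    by (rule bij_betwI[where g="\<lambda>j. nat (j - k)"]) auto
  have "(\<integral>\<^sup>+j. ennreal (2 powr (-(a * real_of_int (j - k)))) \<partial>count_space {j. k \<le> j})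
      = (\<integral>\<^sup>+n. ennreal (2 powr (-(a * real_of_int (k + int n - k)))) \<partial>count_space UNIV)"
    by (rule nn_integral_bij_count_space[OF bij, symmetric])
  also have "\<dots> = (\<Sum>n. ennreal ((2 powr (-a)) ^ n))"
    by (subst nn_integral_count_space_nat) (simp add: powr_power mult.commute)
  also have "\<dots> = ennreal (1 / (1 - 2 powr (-a)))"
    using assms two_powr_neg by (intro geom_ennreal) auto
  finally show ?thesis .
qed

lemma geom_down:
  assumes "a > 0"
  shows "(\<integral>\<^sup>+k. ennreal (2 powr (-(a * real_of_int (j - k)))) \<partial>count_space {k. k \<le> j}) = ennreal (1 / (1 - 2 powr (-a)))"
proof -
  have bij: "bij_betw (\<lambda>n::nat. j - int n) UNIV {k. k \<le> j}"
    by (rule bij_betwI[where g="\<lambda>k. nat (j - k)"]) auto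
  have "(\<integral>\<^sup>+k. ennreal (2 powr (-(a * real_of_int (j - k)))) \<partial>count_space {k. k \<le> j})
      = (\<integral>\<^sup>+n. ennreal (2 powr (-(a * real_of_int (j - (j - int n))))) \<partial>count_space UNIV)"
    by (rule nn_integral_bij_count_space[OF bij, symmetric])
  also have "\<dots> = (\<Sum>n. ennreal ((2 powr (-a)) ^ n))"
    by (subst nn_integral_count_space_nat) (simp add: powr_power mult.commute)
  also have "\<dots> = ennreal (1 / (1 - 2 powr (-a)))"
    using assms two_powr_neg by (intro geom_ennreal) auto
  finally show ?thesis .
qed



lemma cs_mono_set: "A \<subseteq> B \<Longrightarrow> (\<integral>\<^sup>+x. f x \<partial>count_space A) \<le> (\<integral>\<^sup>+x. (f x::ennreal) \<partial>count_space B)"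
  by (subst (1 2) nn_integral_count_space_indicator)
     (auto intro!: nn_integral_mono split: split_indicator simp: NO_MATCH_def)

lemma cs_restrict: "(\<integral>\<^sup>+j. f j \<partial>count_space {j\<in>J. P j}) = (\<integral>\<^sup>+j. (if P j then f j else 0) \<partial>count_space J)"
proof -
  have "(\<integral>\<^sup>+j. f j \<partial>count_space {j\<in>J. P j}) = (\<integral>\<^sup>+j. (if P j then f j else 0) \<partial>count_space {j\<in>J. P j})"
    by (intro nn_integral_cong) auto
  also have "\<dots> = (\<integral>\<^sup>+j. (if P j then f j else 0) \<partial>count_space J)"
    by (rule nn_integral_count_space_eq) auto
  finally show ?thesis .
qed

lemma pw_aux: assumes "p > 0"
  shows "ennreal (2 powr (-(1/(2*p) * real_of_int (j - k)))) *
         epow (ennreal (2 powr (real_of_int (j - k) / 2)) * epow a p) (1/p) = a"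
proof -
  have "epow (ennreal (2 powr (real_of_int (j - k) / 2)) * epow a p) (1/p)
      = ennreal ((2 powr (real_of_int (j - k) / 2)) powr (1/p)) * a"
    using assms by (subst epow_cmult) (auto simp: epow_inv)
  also have "(2 powr (real_of_int (j - k) / 2)) powr (1/p) = 2 powr (1/(2*p) * real_of_int (j - k))"
    by (simp add: powr_powr)
  finally have "ennreal (2 powr (-(1/(2*p) * real_of_int (j - k)))) *
         epow (ennreal (2 powr (real_of_int (j - k) / 2)) * epow a p) (1/p)
       = ennreal (2 powr (-(1/(2*p) * real_of_int (j - k))) * 2 powr (1/(2*p) * real_of_int (j - k))) * a"
    by (simp add: ennreal_mult mult.assoc)
  also have "2 powr (-(1/(2*p) * real_of_int (j - k))) * 2 powr (1/(2*p) * real_of_int (j - k)) = 1"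
    by (simp add: powr_add[symmetric])
  finally show ?thesis by simp
qed

lemma hardy:
  fixes d :: "int \<Rightarrow> ennreal" and J :: "int set" and p :: real
  assumes p: "p > 0"
  shows "(\<integral>\<^sup>+k. ennreal (2 powr real_of_int k) * epow (\<integral>\<^sup>+j. d j \<partial>count_space {j\<in>J. k \<le> j}) p \<partial>count_space J)
   \<le> ennreal ((1/(1 - 2 powr (-(1/(2*p))))) powr p * (1/(1 - 2 powr (-(1/2))))) *
     (\<integral>\<^sup>+j. ennreal (2 powr real_of_int j) * epow (d j) p \<partial>count_space J)"
proof -
  define K1 where "K1 = 1/(1 - 2 powr (-(1/(2*p))))"
  define K2 where "K2 = 1/(1 - (2::real) powr (-(1/2)))"
  have K1: "K1 \<ge> 0" unfolding K1_def using two_powr_neg[of "1/(2*p)"] p by auto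
  have K2: "K2 \<ge> 0" unfolding K2_def using two_powr_neg[of "1/2"] by auto
  define e where "e j = epow (d j) p" for j
  define T where "T k = (\<integral>\<^sup>+j. (if k \<le> j then ennreal (2 powr (real_of_int (j - k) / 2)) * e j else 0) \<partial>count_space J)" for k
  have step2: "epow (\<integral>\<^sup>+j. d j \<partial>count_space {j\<in>J. k \<le> j}) p \<le> ennreal (K1 powr p) * T k" for k
  proof -
    have "(\<integral>\<^sup>+j. d j \<partial>count_space {j\<in>J. k \<le> j})
        \<le> (\<integral>\<^sup>+j. ennreal (2 powr (-(1/(2*p) * real_of_int (j - k)))) * epow (T k) (1/p) \<partial>count_space {j\<in>J. k \<le> j})"
    proof (intro nn_integral_mono)
      fix j assume "j \<in> space (count_space {j\<in>J. k \<le> j})"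
      then have j: "j \<in> J" "k \<le> j" by auto
      have "d j = ennreal (2 powr (-(1/(2*p) * real_of_int (j - k)))) *
         epow (ennreal (2 powr (real_of_int (j - k) / 2)) * e j) (1/p)"
        unfolding e_def using pw_aux[OF p] by simp
      also have "\<dots> \<le> ennreal (2 powr (-(1/(2*p) * real_of_int (j - k)))) * epow (T k) (1/p)"
      proof (intro mult_left_mono epow_mono)
        show "ennreal (2 powr (real_of_int (j - k) / 2)) * e j \<le> T k"
          unfolding T_def using cs_elem_le[OF j(1), of "\<lambda>j. if k \<le> j then ennreal (2 powr (real_of_int (j - k) / 2)) * e j else 0"] j
          by simp
      qed (use p in auto)
      finally show "d j \<le> ennreal (2 powr (-(1/(2*p) * real_of_int (j - k)))) * epow (T k) (1/p)" .
    qed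
    also have "\<dots> = (\<integral>\<^sup>+j. ennreal (2 powr (-(1/(2*p) * real_of_int (j - k)))) \<partial>count_space {j\<in>J. k \<le> j}) * epow (T k) (1/p)"
      by (rule nn_integral_multc) simp
    also have "\<dots> \<le> ennreal K1 * epow (T k) (1/p)"
    proof (rule mult_right_mono)
      have "(\<integral>\<^sup>+j. ennreal (2 powr (-(1/(2*p) * real_of_int (j - k)))) \<partial>count_space {j\<in>J. k \<le> j})
          \<le> (\<integral>\<^sup>+j. ennreal (2 powr (-(1/(2*p) * real_of_int (j - k)))) \<partial>count_space {j. k \<le> j})"
        by (rule cs_mono_set) auto
      also have "\<dots> = ennreal K1" unfolding K1_def using p by (intro geom_up) auto
      finally show "(\<integral>\<^sup>+j. ennreal (2 powr (-(1/(2*p) * real_of_int (j - k)))) \<partial>count_space {j\<in>J. k \<le> j}) \<le> ennreal K1" .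
    qed simp
    finally have "epow (\<integral>\<^sup>+j. d j \<partial>count_space {j\<in>J. k \<le> j}) p \<le> epow (ennreal K1 * epow (T k) (1/p)) p"
      using p by (intro epow_mono) auto
    also have "\<dots> = ennreal (K1 powr p) * T k"
      using p K1 by (simp add: epow_cmult epow_inv')
    finally show ?thesis .
  qed
  have "(\<integral>\<^sup>+k. ennreal (2 powr real_of_int k) * epow (\<integral>\<^sup>+j. d j \<partial>count_space {j\<in>J. k \<le> j}) p \<partial>count_space J)
      \<le> (\<integral>\<^sup>+k. ennreal (K1 powr p) * (ennreal (2 powr real_of_int k) * T k) \<partial>count_space J)"
    by (intro nn_integral_mono) (metis (no_types, lifting) step2 mult.left_commute mult_left_mono zero_le)
  also have "\<dots> = ennreal (K1 powr p) * (\<integral>\<^sup>+k. ennreal (2 powr real_of_int k) * T k \<partial>count_space J)"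
    by (rule nn_integral_cmult) simp
  finally have first: "(\<integral>\<^sup>+k. ennreal (2 powr real_of_int k) * epow (\<integral>\<^sup>+j. d j \<partial>count_space {j\<in>J. k \<le> j}) p \<partial>count_space J)
      \<le> ennreal (K1 powr p) * (\<integral>\<^sup>+k. ennreal (2 powr real_of_int k) * T k \<partial>count_space J)" .
  have "(\<integral>\<^sup>+k. ennreal (2 powr real_of_int k) * T k \<partial>count_space J)
     = (\<integral>\<^sup>+k. \<integral>\<^sup>+j. (if k \<le> j then ennreal (2 powr real_of_int k) * ennreal (2 powr (real_of_int (j - k) / 2)) * e j else 0) \<partial>count_space J \<partial>count_space J)"
    unfolding T_def
    by (intro nn_integral_cong, subst nn_integral_cmult[symmetric]) (auto intro!: nn_integral_cong simp: mult.assoc)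
  also have "\<dots> = (\<integral>\<^sup>+j. \<integral>\<^sup>+k. (if k \<le> j then ennreal (2 powr real_of_int k) * ennreal (2 powr (real_of_int (j - k) / 2)) * e j else 0) \<partial>count_space J \<partial>count_space J)"
    by (rule nn_integral_count_space_nn_integral) auto
  also have "\<dots> \<le> (\<integral>\<^sup>+j. ennreal K2 * (ennreal (2 powr real_of_int j) * e j) \<partial>count_space J)"
  proof (intro nn_integral_mono)
    fix j
    have "(\<integral>\<^sup>+k. (if k \<le> j then ennreal (2 powr real_of_int k) * ennreal (2 powr (real_of_int (j - k) / 2)) * e j else 0) \<partial>count_space J)
       = (\<integral>\<^sup>+k. (if k \<le> j then ennreal (2 powr (-(1/2 * real_of_int (j - k)))) else 0) * (ennreal (2 powr real_of_int j) * e j) \<partial>count_space J)"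
    proof (intro nn_integral_cong)
      fix k
      have "2 powr real_of_int k * 2 powr (real_of_int (j - k) / 2) = 2 powr (-(1/2 * real_of_int (j - k))) * 2 powr real_of_int j"
        by (simp add: powr_add[symmetric] field_simps)
      then have "ennreal (2 powr real_of_int k) * ennreal (2 powr (real_of_int (j - k) / 2)) = ennreal (2 powr (-(1/2 * real_of_int (j - k)))) * ennreal (2 powr real_of_int j)"
        by (simp add: ennreal_mult[symmetric])
      then show "(if k \<le> j then ennreal (2 powr real_of_int k) * ennreal (2 powr (real_of_int (j - k) / 2)) * e j else 0)
        = (if k \<le> j then ennreal (2 powr (-(1/2 * real_of_int (j - k)))) else 0) * (ennreal (2 powr real_of_int j) * e j)"
        by (simp add: mult.assoc[symmetric])
    qed
    also have "\<dots> = (\<integral>\<^sup>+k. (if k \<le> j then ennreal (2 powr (-(1/2 * real_of_int (j - k)))) else 0) \<partial>count_space J) * (ennreal (2 powr real_of_int j) * e j)"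
      by (rule nn_integral_multc) simp
    also have "\<dots> \<le> ennreal K2 * (ennreal (2 powr real_of_int j) * e j)"
    proof (rule mult_right_mono)
      have "(\<integral>\<^sup>+k. (if k \<le> j then ennreal (2 powr (-(1/2 * real_of_int (j - k)))) else 0) \<partial>count_space J)
          = (\<integral>\<^sup>+k. ennreal (2 powr (-(1/2 * real_of_int (j - k)))) \<partial>count_space {k\<in>J. k \<le> j})"
        by (rule cs_restrict[symmetric])
      also have "\<dots> \<le> (\<integral>\<^sup>+k. ennreal (2 powr (-(1/2 * real_of_int (j - k)))) \<partial>count_space {k. k \<le> j})"
        by (rule cs_mono_set) auto
      also have "\<dots> = ennreal K2" unfolding K2_def by (intro geom_down) auto
      finally show "(\<integral>\<^sup>+k. (if k \<le> j then ennreal (2 powr (-(1/2 * real_of_int (j - k)))) else 0) \<partial>count_space J) \<le> ennreal K2" .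
    qed simp
    finally show "(\<integral>\<^sup>+k. (if k \<le> j then ennreal (2 powr real_of_int k) * ennreal (2 powr (real_of_int (j - k) / 2)) * e j else 0) \<partial>count_space J)
       \<le> ennreal K2 * (ennreal (2 powr real_of_int j) * e j)" .
  qed
  also have "\<dots> = ennreal K2 * (\<integral>\<^sup>+j. ennreal (2 powr real_of_int j) * e j \<partial>count_space J)"
    by (rule nn_integral_cmult) simp
  finally have "(\<integral>\<^sup>+k. ennreal (2 powr real_of_int k) * epow (\<integral>\<^sup>+j. d j \<partial>count_space {j\<in>J. k \<le> j}) p \<partial>count_space J)
     \<le> ennreal (K1 powr p) * (ennreal K2 * (\<integral>\<^sup>+j. ennreal (2 powr real_of_int j) * e j \<partial>count_space J))"
    using first by (meson mult_left_mono order_trans zero_le)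
  then show ?thesis
    unfolding K1_def[symmetric] K2_def[symmetric] e_def
    using K2 by (simp add: ennreal_mult mult.assoc)
qed



locale L =
  fixes q r :: real and u w h :: "real \<Rightarrow> ennreal" and x :: "int \<Rightarrow> ereal" and Z :: "int set"
  assumes q: "q > 0" and r: "r > 0"
    and u_meas: "u \<in> borel_measurable lebesgue" and w_meas: "w \<in> borel_measurable lebesgue"
    and h_meas: "h \<in> borel_measurable lebesgue"
    and u_pos: "\<And>y. y > 0 \<Longrightarrow> 0 < Int_ab u 0 (ereal y) \<and> Int_ab u 0 (ereal y) < \<infinity>"
    and Z_ne: "Z \<noteq> {}" and Z_down: "\<And>k. k \<in> Z \<Longrightarrow> k - 1 \<in> Z"
    and x_real: "\<And>k. k \<in> Z \<Longrightarrow> \<exists>c>0. x k = ereal c"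
    and x_u: "\<And>k. k \<in> Z \<Longrightarrow> Int_ab u 0 (x k) = ennreal (2 powr real_of_int k)"
    and x_top: "\<And>k. k \<in> Z \<Longrightarrow> k + 1 \<notin> Z \<Longrightarrow> x (k + 1) = \<infinity> \<and> Int_ab u 0 \<infinity> < ennreal (2 powr real_of_int (k + 1))"
begin

lemma Z_le: assumes "k \<in> Z" "j \<le> k" shows "j \<in> Z"
proof -
  have "\<forall>n. n \<ge> 0 \<longrightarrow> k - n \<in> Z"
  proof (intro allI impI)
    fix n :: int assume "n \<ge> 0"
    then show "k - n \<in> Z"
    proof (induction n rule: int_ge_induct)
      case base then show ?case using assms by simp
    next
      case (step i) then show ?case using Z_down[of "k - i"] by (simp add: algebra_simps)
    qed
  qed
  from this[rule_format, of "k - j"] show ?thesis using assms(2) by simp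
qed

lemma x_step: assumes "k \<in> Z" shows "x k < x (k + 1)"
proof (cases "k + 1 \<in> Z")
  case True
  show ?thesis
  proof (rule ccontr)
    assume "\<not> x k < x (k + 1)"
    then have "Int_ab u 0 (x (k+1)) \<le> Int_ab u 0 (x k)" by (intro Int_ab_subset) auto
    then have "ennreal (2 powr real_of_int (k+1)) \<le> ennreal (2 powr real_of_int k)"
      using x_u assms True by simp
    then show False by (simp add: ennreal_le_iff)
  qed
next
  case False
  then show ?thesis using x_top[OF assms] x_real[OF assms] by auto
qed

lemma x_mono: assumes "k \<in> Z" "j \<le> k" shows "x j \<le> x k"
proof -
  have "\<forall>n. n \<ge> 0 \<longrightarrow> x (k - n) \<le> x k"
  proof (intro allI impI)
    fix n :: int assume "n \<ge> 0"
    then show "x (k - n) \<le> x k"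
    proof (induction n rule: int_ge_induct)
      case base then show ?case by simp
    next
      case (step i)
      have "k - (i + 1) \<in> Z" using Z_le[OF assms(1)] step by simp
      then have "x (k - (i+1)) < x (k - (i + 1) + 1)" by (rule x_step)
      then show ?case using step by (simp add: algebra_simps)
    qed
  qed
  from this[rule_format, of "k - j"] show ?thesis using assms(2) by simp
qed

lemma x_mono_strict: assumes "k \<in> Z" "j < k" shows "x j < x k"
  using x_step[of j] x_mono[OF assms(1), of "j+1"] assms Z_le[OF assms(1), of j] by auto

lemma u_int_real: "k \<in> Z \<Longrightarrow> Int_ab u 0 (x k) \<noteq> \<infinity>"
  using x_u by simp

lemma mass_prev: assumes "k \<in> Z" shows "Int_ab u (x (k - 1)) (x k) = ennreal (2 powr real_of_int (k - 1))"
proof -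
  have k1: "k - 1 \<in> Z" using Z_down assms by simp
  obtain c where c: "c > 0" "x (k - 1) = ereal c" using x_real[OF k1] by auto
  have lt: "x (k - 1) < x k" using x_step[OF k1] by simp
  have "Int_ab u 0 (x k) = Int_ab u 0 (x (k-1)) + Int_ab u (x (k - 1)) (x k)"
    using Int_ab_split[OF u_meas, of 0 c "x k"] c lt by auto
  then have "ennreal (2 powr real_of_int k) = ennreal (2 powr real_of_int (k - 1)) + Int_ab u (x (k - 1)) (x k)"
    using x_u assms k1 by simp
  moreover have "ennreal (2 powr real_of_int k) = ennreal (2 powr real_of_int (k - 1)) + ennreal (2 powr real_of_int (k - 1))"
  proof -
    have "(2::real) powr real_of_int k = 2 * 2 powr real_of_int (k - 1)"
      by (simp add: powr_mult_base)
    then show ?thesis by (simp add: ennreal_plus[symmetric] del: ennreal_plus)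
  qed
  ultimately have "ennreal (2 powr real_of_int (k - 1)) + Int_ab u (x (k - 1)) (x k) = ennreal (2 powr real_of_int (k - 1)) + ennreal (2 powr real_of_int (k - 1))"
    by simp
  then show ?thesis unfolding ennreal_add_left_cancel by simp
qed

lemma mass_next: assumes "k \<in> Z" shows "Int_ab u (x k) (x (k + 1)) \<le> ennreal (2 powr real_of_int k)"
proof (cases "k + 1 \<in> Z")
  case True
  then show ?thesis using mass_prev[OF True] by simp
next
  case False
  obtain c where c: "c > 0" "x k = ereal c" using x_real[OF assms] by auto
  have top: "x (k+1) = \<infinity>" and lt: "Int_ab u 0 \<infinity> < ennreal (2 powr real_of_int (k + 1))"
    using x_top[OF assms False] by auto
  have "Int_ab u 0 \<infinity> = Int_ab u 0 (x k) + Int_ab u (x k) (x (k + 1))"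
    using Int_ab_split[OF u_meas, of 0 c "\<infinity>"] c top by auto
  then have "ennreal (2 powr real_of_int k) + Int_ab u (x k) (x (k + 1)) < ennreal (2 powr real_of_int k) + ennreal (2 powr real_of_int k)"
    using lt x_u[OF assms]
    by (simp add: powr_add ennreal_plus[symmetric] mult.commute del: ennreal_plus)
  then show ?thesis unfolding ennreal_add_left_cancel_less by simp
qed

end


context L begin

lemma cover:
  assumes y: "y > 0" and nn: "\<And>k. k \<in> Z \<Longrightarrow> x k \<noteq> ereal y"
  shows "\<exists>k\<in>Z. x k < ereal y \<and> ereal y < x (k + 1)"
proof (rule ccontr)
  assume H: "\<not> (\<exists>k\<in>Z. x k < ereal y \<and> ereal y < x (k + 1))"
  define I where "I = Int_ab u 0 (ereal y)"
  have I: "0 < I" "I < \<infinity>" using u_pos[OF y] I_def by auto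
  define i where "i = enn2real I"
  have Ii: "I = ennreal i" and ipos: "i > 0" using I unfolding i_def
    by (auto simp: enn2real_positive_iff less_top)
  obtain k1 where k1: "k1 \<in> Z" using Z_ne by auto
  define k0 where "k0 = min k1 (\<lfloor>log 2 i\<rfloor> - 1)"
  have k0Z: "k0 \<in> Z" using Z_le[OF k1] unfolding k0_def by simp
  have "2 powr real_of_int k0 \<le> 2 powr (real_of_int \<lfloor>log 2 i\<rfloor> - 1)"
    unfolding k0_def by (intro powr_mono) auto
  also have "\<dots> \<le> 2 powr (log 2 i - 1)"
    by (intro powr_mono) auto
  also have "\<dots> < 2 powr (log 2 i)"
    by (intro powr_less_mono) auto
  also have "\<dots> = i" using ipos by simp
  finally have k0i: "2 powr real_of_int k0 < i" .
  have xk0: "x k0 < ereal y"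
  proof (rule ccontr)
    assume "\<not> x k0 < ereal y"
    then have "I \<le> Int_ab u 0 (x k0)" unfolding I_def by (intro Int_ab_subset) auto
    then have "ennreal i \<le> ennreal (2 powr real_of_int k0)" using x_u[OF k0Z] Ii by simp
    then show False using k0i ipos by (simp add: ennreal_le_iff)
  qed
  have all: "\<forall>n. n \<ge> 0 \<longrightarrow> k0 + n \<in> Z \<and> x (k0 + n) < ereal y"
  proof (intro allI impI)
    fix n :: int assume "n \<ge> 0"
    then show "k0 + n \<in> Z \<and> x (k0 + n) < ereal y"
    proof (induction n rule: int_ge_induct)
      case base then show ?case using k0Z xk0 by simp
    next
      case (step m)
      then have mZ: "k0 + m \<in> Z" and lt: "x (k0 + m) < ereal y" by auto
      have le: "x (k0 + m + 1) \<le> ereal y" using H mZ lt by auto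
      have inZ: "k0 + m + 1 \<in> Z"
      proof (rule ccontr)
        assume "k0 + m + 1 \<notin> Z"
        then have "x (k0 + m + 1) = \<infinity>" using x_top[OF mZ] by simp
        then show False using le by simp
      qed
      have "x (k0 + m + 1) \<noteq> ereal y" using nn[OF inZ] .
      then show ?case using inZ le by (simp add: add.assoc)
    qed
  qed
  define N where "N = max 0 (\<lceil>log 2 i\<rceil> + 1 - k0)"
  have NZ: "k0 + N \<in> Z" and xN: "x (k0 + N) < ereal y" using all N_def by auto
  have "i = 2 powr (log 2 i)" using ipos by simp
  also have "\<dots> \<le> 2 powr (real_of_int \<lceil>log 2 i\<rceil>)" by (intro powr_mono) auto
  also have "\<dots> < 2 powr (real_of_int \<lceil>log 2 i\<rceil> + 1)" by (intro powr_less_mono) auto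
  also have "\<dots> \<le> 2 powr real_of_int (k0 + N)" unfolding N_def by (intro powr_mono) auto
  finally have iN: "i < 2 powr real_of_int (k0 + N)" .
  have "Int_ab u 0 (x (k0 + N)) \<le> I" unfolding I_def using xN by (intro Int_ab_subset) auto
  then have "ennreal (2 powr real_of_int (k0 + N)) \<le> ennreal i" using x_u[OF NZ] Ii by simp
  then show False using iN ipos by (simp add: ennreal_le_iff)
qed

lemma cover_from:
  assumes y: "y > 0" and nn: "\<And>k. k \<in> Z \<Longrightarrow> x k \<noteq> ereal y" and k: "k \<in> Z" and xk: "x k < ereal y"
  shows "\<exists>j\<in>Z. k \<le> j \<and> x j < ereal y \<and> ereal y < x (j + 1)"
proof -
  obtain j where j: "j \<in> Z" "x j < ereal y" "ereal y < x (j + 1)" using cover[OF y nn] by auto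
  have "k \<le> j"
  proof (rule ccontr)
    assume "\<not> k \<le> j"
    then have "x (j + 1) \<le> x k" using x_mono[OF k, of "j+1"] by simp
    then show False using j xk by simp
  qed
  then show ?thesis using j by auto
qed

lemma nodes_null: "AE y in lebesgue. \<forall>k\<in>Z. x k \<noteq> ereal y"
proof -
  have "countable (real_of_ereal ` x ` Z)" by simp
  then have "real_of_ereal ` x ` Z \<in> null_sets lborel" by (rule countable_imp_null_set_lborel)
  then have "AE y in lborel. y \<notin> real_of_ereal ` x ` Z" by (rule AE_not_in)
  then have "AE y in lebesgue. y \<notin> real_of_ereal ` x ` Z" by (rule AE_completion)
  then show ?thesis
    by eventually_elim (auto, metis image_eqI real_of_ereal.simps(1))
qed

end


context L begin

definition "p = r / q"
definition "He b = Int_ab h b \<infinity>"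
definition "Gf t = epow (He (ereal t)) q * w t"
definition "Fe b = Int_ab Gf b \<infinity>"
definition "Phi y = epow (Fe (ereal y)) p * u y"
definition "Ak k = Int_ab (\<lambda>s. epow (Int_ab h (ereal s) (x (k + 1))) q * w s) (x k) (x (k + 1))"
definition "Sk k t = (SUP s\<in>{s. ereal t < ereal s \<and> ereal s \<le> x (k + 1)}.
                         epow (Int_ab w (x k) (ereal s)) (r / q) * epow (He (ereal s)) r)"
definition "Bt k = Int_ab (\<lambda>t. u t * Sk k t) (x (k - 1)) (x k)"

lemma p_pos: "p > 0" using q r by (simp add: p_def)
lemma qp: "q * p = r" using q by (simp add: p_def)

lemma He_anti: "b \<le> b' \<Longrightarrow> He b' \<le> He b"
  unfolding He_def by (intro Int_ab_subset) auto

lemma Fe_anti: "b \<le> b' \<Longrightarrow> Fe b' \<le> Fe b"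
  unfolding Fe_def by (intro Int_ab_subset) auto

lemma Gf_meas: "Gf \<in> borel_measurable lebesgue"
proof -
  have "(\<lambda>t. epow (He (ereal t)) q) \<in> borel_measurable lebesgue"
    by (rule antimono_borel) (use q in \<open>auto intro!: epow_mono He_anti\<close>)
  then show ?thesis unfolding Gf_def[abs_def] using w_meas by measurable
qed

lemma Phi_meas: "Phi \<in> borel_measurable lebesgue"
proof -
  have "(\<lambda>y. epow (Fe (ereal y)) p) \<in> borel_measurable lebesgue"
    by (rule antimono_borel) (use p_pos in \<open>auto intro!: epow_mono Fe_anti\<close>)
  then show ?thesis unfolding Phi_def[abs_def] using u_meas by measurable
qed

lemma Ah_meas: "(\<lambda>t. epow (Int_ab h (ereal t) b) q * w t) \<in> borel_measurable lebesgue"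
proof -
  have "(\<lambda>t. epow (Int_ab h (ereal t) b) q) \<in> borel_measurable lebesgue"
    by (rule antimono_borel) (use q in \<open>auto intro!: epow_mono Int_ab_subset\<close>)
  then show ?thesis using w_meas by measurable
qed

lemma a_pow: "epow (ennreal (2 powr (real_of_int k / r)) * epow (Ak k) (1 / q)) r = ennreal (2 powr real_of_int k) * epow (Ak k) p"
proof -
  have "epow (ennreal (2 powr (real_of_int k / r)) * epow (Ak k) (1 / q)) r
       = ennreal ((2 powr (real_of_int k / r)) powr r) * epow (epow (Ak k) (1 / q)) r"
    using r by (intro epow_cmult) auto
  also have "(2 powr (real_of_int k / r)) powr r = 2 powr real_of_int k"
    using r by (simp add: powr_powr)
  also have "epow (epow (Ak k) (1 / q)) r = epow (Ak k) p"
    using q r by (simp add: epow_epow p_def)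
  finally show ?thesis .
qed

lemma Ak_le: "Ak k \<le> Fe (x k)"
  unfolding Ak_def Fe_def Gf_def He_def
  by (intro order_trans[OF Int_ab_mono Int_ab_subset] mult_right_mono epow_mono Int_ab_subset) (use q in auto)

lemma Phi_lower: assumes "ereal t < b" shows "u t * epow (Fe b) p \<le> Phi t"
  unfolding Phi_def using assms p_pos
  by (subst mult.commute) (intro mult_right_mono epow_mono Fe_anti, auto)

lemma R1a: assumes "k \<in> Z"
  shows "ennreal (2 powr real_of_int k) * epow (Fe (x k)) p \<le> 2 * Int_ab Phi (x (k - 1)) (x k)"
proof -
  have "(2::real) powr real_of_int k = 2 * 2 powr real_of_int (k - 1)"
    by (simp add: powr_mult_base)
  then have "ennreal (2 powr real_of_int k) * epow (Fe (x k)) p = 2 * (Int_ab u (x (k - 1)) (x k) * epow (Fe (x k)) p)"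
    using mass_prev[OF assms] by (simp add: ennreal_mult mult.assoc)
  moreover have "Int_ab u (x (k - 1)) (x k) * epow (Fe (x k)) p = Int_ab (\<lambda>t. u t * epow (Fe (x k)) p) (x (k - 1)) (x k)"
    by (rule Int_ab_multc[symmetric, OF u_meas])
  moreover have "\<dots> \<le> Int_ab Phi (x (k - 1)) (x k)"
    by (intro Int_ab_mono Phi_lower) (auto simp: intv_def)
  ultimately show ?thesis by (metis mult_left_mono zero_le)
qed

lemma Sk_le: "Sk k t \<le> epow (Fe (x k)) p"
  unfolding Sk_def
proof (rule SUP_least)
  fix s assume "s \<in> {s. ereal t < ereal s \<and> ereal s \<le> x (k + 1)}"
  show "epow (Int_ab w (x k) (ereal s)) (r / q) * epow (He (ereal s)) r \<le> epow (Fe (x k)) p"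
  proof (cases "ereal s \<le> x k")
    case True
    then show ?thesis using Int_ab_empty[OF True] q r by simp
  next
    case False
    have "epow (Int_ab w (x k) (ereal s)) (r / q) * epow (He (ereal s)) r
        = epow (Int_ab w (x k) (ereal s) * epow (He (ereal s)) q) p"
      using q r p_pos by (simp add: epow_mult epow_epow qp p_def)
    also have "Int_ab w (x k) (ereal s) * epow (He (ereal s)) q = Int_ab (\<lambda>t. w t * epow (He (ereal s)) q) (x k) (ereal s)"
      by (rule Int_ab_multc[symmetric, OF w_meas])
    also have "\<dots> \<le> Int_ab Gf (x k) (ereal s)"
      unfolding Gf_def
      by (intro Int_ab_mono) (auto simp: intv_def mult.commute q intro!: mult_left_mono epow_mono He_anti)
    also have "\<dots> \<le> Fe (x k)" unfolding Fe_def by (intro Int_ab_subset) auto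
    finally show ?thesis using p_pos by (auto intro: epow_mono)
  qed
qed

lemma R1b: "Bt k \<le> Int_ab Phi (x (k - 1)) (x k)"
  unfolding Bt_def
proof (intro Int_ab_mono)
  fix t assume "t \<in> intv (x (k - 1)) (x k)"
  then have "ereal t < x k" by (simp add: intv_def)
  then show "u t * Sk k t \<le> Phi t"
    using Phi_lower Sk_le by (meson mult_left_mono order_trans zero_le)
qed

lemma disjoint_sum:
  assumes g: "g \<in> borel_measurable lebesgue"
  shows "(\<integral>\<^sup>+k. Int_ab g (x (k - 1)) (x k) \<partial>count_space Z) \<le> Int_ab g 0 \<infinity>"
proof -
  have "(\<integral>\<^sup>+k. Int_ab g (x (k - 1)) (x k) \<partial>count_space Z)
      = (\<integral>\<^sup>+y. \<integral>\<^sup>+k. g y * indicator (intv (x (k - 1)) (x k)) y \<partial>count_space Z \<partial>lebesgue)"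
    unfolding Int_ab_def using g by (intro nn_integral_count_space_nn_integral[symmetric]) auto
  also have "\<dots> \<le> (\<integral>\<^sup>+y. g y * indicator (intv 0 \<infinity>) y \<partial>lebesgue)"
  proof (intro nn_integral_mono)
    fix y
    show "(\<integral>\<^sup>+k. g y * indicator (intv (x (k - 1)) (x k)) y \<partial>count_space Z) \<le> g y * indicator (intv 0 \<infinity>) y"
    proof (cases "\<exists>k\<in>Z. y \<in> intv (x (k - 1)) (x k)")
      case False
      then have "(\<integral>\<^sup>+k. g y * indicator (intv (x (k - 1)) (x k)) y \<partial>count_space Z) = (\<integral>\<^sup>+k. 0 \<partial>count_space Z)"
        by (intro nn_integral_cong) auto
      then show ?thesis by simp
    next
      case True
      then obtain k0 where k0: "k0 \<in> Z" "y \<in> intv (x (k0 - 1)) (x k0)" by auto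
      have uniq: "k = k0" if "k \<in> Z" "y \<in> intv (x (k - 1)) (x k)" for k
      proof (rule ccontr)
        assume "k \<noteq> k0"
        then consider "k < k0" | "k0 < k" by linarith
        then show False
        proof cases
          case 1
          then have "x k \<le> x (k0 - 1)" using x_mono[of "k0 - 1" k] Z_down[OF k0(1)] by simp
          then show False using that(2) k0(2) by (auto simp: intv_def)
        next
          case 2
          then have "x k0 \<le> x (k - 1)" using x_mono[of "k - 1" k0] Z_down[OF that(1)] by simp
          then show False using that(2) k0(2) by (auto simp: intv_def)
        qed
      qed
      have "(\<integral>\<^sup>+k. g y * indicator (intv (x (k - 1)) (x k)) y \<partial>count_space Z) = (\<Sum>k\<in>{k0}. g y * indicator (intv (x (k - 1)) (x k)) y)"
      proof (rule nn_integral_count_space')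
        fix k assume "k \<in> Z" "k \<notin> {k0}"
        then have "y \<notin> intv (x (k - 1)) (x k)" using uniq by blast
        then show "g y * indicator (intv (x (k - 1)) (x k)) y = 0" by simp
      qed (use k0 in auto)
      also have "\<dots> = g y" using k0 by simp
      also have "\<dots> = g y * indicator (intv 0 \<infinity>) y"
      proof -
        obtain c where c: "c > 0" "x (k0 - 1) = ereal c" using x_real Z_down[OF k0(1)] by blast
        then have "y > 0" using k0(2) by (auto simp: intv_def)
        then show ?thesis by (simp add: intv_def)
      qed
      finally show ?thesis by simp
    qed
  qed
  finally show ?thesis unfolding Int_ab_def .
qed

end


context L begin

lemma R2a: "Int_ab Phi 0 \<infinity> \<le> (\<integral>\<^sup>+k. ennreal (2 powr real_of_int k) * epow (Fe (x k)) p \<partial>count_space Z)"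
proof -
  have "Int_ab Phi 0 \<infinity> \<le> (\<integral>\<^sup>+y. \<integral>\<^sup>+k. u y * epow (Fe (x k)) p * indicator (intv (x k) (x (k + 1))) y \<partial>count_space Z \<partial>lebesgue)"
    unfolding Int_ab_def
  proof (rule nn_integral_mono_AE)
    show "AE y in lebesgue. Phi y * indicator (intv 0 \<infinity>) y
       \<le> (\<integral>\<^sup>+k. u y * epow (Fe (x k)) p * indicator (intv (x k) (x (k + 1))) y \<partial>count_space Z)"
      using nodes_null
    proof eventually_elim
      case (elim y)
      show ?case
      proof (cases "y > 0")
        case False
        then show ?thesis by (simp add: intv_def)
      next
        case True
        obtain k where k: "k \<in> Z" "x k < ereal y" "ereal y < x (k + 1)"
          using cover[OF True] elim by auto
        have "Phi y * indicator (intv 0 \<infinity>) y = Phi y" using True by (simp add: intv_def)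
        also have "\<dots> \<le> u y * epow (Fe (x k)) p * indicator (intv (x k) (x (k + 1))) y"
          unfolding Phi_def using k p_pos
          by (simp add: intv_def mult.commute) (intro mult_left_mono epow_mono Fe_anti, auto)
        also have "\<dots> \<le> (\<integral>\<^sup>+k. u y * epow (Fe (x k)) p * indicator (intv (x k) (x (k + 1))) y \<partial>count_space Z)"
          by (rule cs_elem_le[OF k(1)])
        finally show ?thesis .
      qed
    qed
  qed
  also have "\<dots> = (\<integral>\<^sup>+k. \<integral>\<^sup>+y. u y * epow (Fe (x k)) p * indicator (intv (x k) (x (k + 1))) y \<partial>lebesgue \<partial>count_space Z)"
    using u_meas by (intro nn_integral_count_space_nn_integral) auto
  also have "\<dots> \<le> (\<integral>\<^sup>+k. ennreal (2 powr real_of_int k) * epow (Fe (x k)) p \<partial>count_space Z)"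
  proof (intro nn_integral_mono)
    fix k assume "k \<in> space (count_space Z)"
    then have kZ: "k \<in> Z" by simp
    have "(\<integral>\<^sup>+y. u y * epow (Fe (x k)) p * indicator (intv (x k) (x (k + 1))) y \<partial>lebesgue)
        = Int_ab (\<lambda>y. u y * epow (Fe (x k)) p) (x k) (x (k + 1))"
      unfolding Int_ab_def ..
    also have "\<dots> = Int_ab u (x k) (x (k + 1)) * epow (Fe (x k)) p"
      by (rule Int_ab_multc[OF u_meas])
    also have "\<dots> \<le> ennreal (2 powr real_of_int k) * epow (Fe (x k)) p"
      by (intro mult_right_mono mass_next[OF kZ]) auto
    finally show "(\<integral>\<^sup>+y. u y * epow (Fe (x k)) p * indicator (intv (x k) (x (k + 1))) y \<partial>lebesgue)
       \<le> ennreal (2 powr real_of_int k) * epow (Fe (x k)) p" .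
  qed
  finally show ?thesis .
qed

lemma He_split:
  assumes "ereal t < x (j + 1)"
  shows "He (ereal t) \<le> Int_ab h (ereal t) (x (j + 1)) + He (x (j + 1))"
proof (cases "x (j + 1)")
  case (real c)
  then have "He (ereal t) = Int_ab h (ereal t) (x (j + 1)) + He (x (j + 1))"
    unfolding He_def using Int_ab_split[OF h_meas, of "ereal t" c \<infinity>] assms by simp
  then show ?thesis by simp
next
  case PInf
  then show ?thesis unfolding He_def by simp
next
  case MInf
  then show ?thesis using assms by simp
qed

definition "Ej j = epow (He (x (j + 1))) q * Int_ab w (x j) (x (j + 1))"
definition "Dj j = ennreal (2 powr q) * (Ak j + Ej j)"

lemma R2b: assumes kZ: "k \<in> Z"
  shows "Fe (x k) \<le> (\<integral>\<^sup>+j. Dj j \<partial>count_space {j\<in>Z. k \<le> j})"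
proof -
  define g where "g j t = ennreal (2 powr q) * (epow (Int_ab h (ereal t) (x (j + 1))) q * w t + epow (He (x (j + 1))) q * w t)
     * indicator (intv (x j) (x (j + 1))) t" for j t
  have "Fe (x k) \<le> (\<integral>\<^sup>+t. \<integral>\<^sup>+j. g j t \<partial>count_space {j\<in>Z. k \<le> j} \<partial>lebesgue)"
    unfolding Fe_def Int_ab_def
  proof (rule nn_integral_mono_AE)
    show "AE t in lebesgue. Gf t * indicator (intv (x k) \<infinity>) t \<le> (\<integral>\<^sup>+j. g j t \<partial>count_space {j\<in>Z. k \<le> j})"
      using nodes_null
    proof eventually_elim
      case (elim t)
      show ?case
      proof (cases "x k < ereal t")
        case False
        then show ?thesis by (simp add: intv_def)
      next
        case True
        obtain c where c: "c > 0" "x k = ereal c" using x_real[OF kZ] by auto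
        then have tpos: "t > 0" using True by simp
        obtain j where j: "j \<in> Z" "k \<le> j" "x j < ereal t" "ereal t < x (j + 1)"
          using cover_from[OF tpos _ kZ True] elim by auto
        have "Gf t * indicator (intv (x k) \<infinity>) t = epow (He (ereal t)) q * w t"
          using True by (simp add: intv_def Gf_def)
        also have "\<dots> \<le> epow (Int_ab h (ereal t) (x (j + 1)) + He (x (j + 1))) q * w t"
          using q by (intro mult_right_mono epow_mono He_split j(4)) auto
        also have "\<dots> \<le> ennreal (2 powr q) * (epow (Int_ab h (ereal t) (x (j + 1))) q + epow (He (x (j + 1))) q) * w t"
          using q by (intro mult_right_mono epow_add_le) auto
        also have "\<dots> = g j t"
          unfolding g_def using j by (simp add: intv_def distrib_right mult.assoc)
        also have "\<dots> \<le> (\<integral>\<^sup>+j. g j t \<partial>count_space {j\<in>Z. k \<le> j})"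
          by (rule cs_elem_le) (use j in auto)
        finally show ?thesis .
      qed
    qed
  qed
  also have "\<dots> = (\<integral>\<^sup>+j. \<integral>\<^sup>+t. g j t \<partial>lebesgue \<partial>count_space {j\<in>Z. k \<le> j})"
    unfolding g_def using Ah_meas w_meas by (intro nn_integral_count_space_nn_integral) auto
  also have "\<dots> = (\<integral>\<^sup>+j. Dj j \<partial>count_space {j\<in>Z. k \<le> j})"
  proof (intro nn_integral_cong)
    fix j
    have "(\<integral>\<^sup>+t. g j t \<partial>lebesgue) = Int_ab (\<lambda>t. ennreal (2 powr q) * (epow (Int_ab h (ereal t) (x (j + 1))) q * w t + epow (He (x (j + 1))) q * w t)) (x j) (x (j + 1))"
      unfolding g_def Int_ab_def ..
    also have "\<dots> = ennreal (2 powr q) * (Int_ab (\<lambda>t. epow (Int_ab h (ereal t) (x (j + 1))) q * w t) (x j) (x (j + 1))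
         + Int_ab (\<lambda>t. epow (He (x (j + 1))) q * w t) (x j) (x (j + 1)))"
      using Ah_meas w_meas by (simp add: Int_ab_cmult Int_ab_add)
    also have "\<dots> = Dj j"
      unfolding Dj_def Ej_def Ak_def using w_meas by (simp add: Int_ab_cmult)
    finally show "(\<integral>\<^sup>+t. g j t \<partial>lebesgue) = Dj j" .
  qed
  finally show ?thesis .
qed

lemma R2c: assumes jZ: "j \<in> Z"
  shows "ennreal (2 powr real_of_int j) * epow (Ej j) p \<le> 2 * Bt j"
proof (cases "j + 1 \<in> Z")
  case False
  then have "x (j + 1) = \<infinity>" using x_top[OF jZ] by simp
  then have "He (x (j + 1)) = 0" unfolding He_def by (simp add: Int_ab_empty)
  then have "Ej j = 0" unfolding Ej_def using q by simp
  then show ?thesis using p_pos by simp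
next
  case True
  obtain c where c: "c > 0" "x (j + 1) = ereal c" using x_real[OF True] by auto
  define V where "V = epow (Int_ab w (x j) (ereal c)) (r / q) * epow (He (ereal c)) r"
  have EV: "epow (Ej j) p = V"
    unfolding Ej_def V_def using c q r p_pos
    by (simp add: epow_mult epow_epow qp p_def mult.commute)
  have "Int_ab (\<lambda>t. u t * V) (x (j - 1)) (x j) \<le> Bt j"
    unfolding Bt_def
  proof (intro Int_ab_mono mult_left_mono)
    fix t assume t: "t \<in> intv (x (j - 1)) (x j)"
    have "ereal t < x j" using t by (simp add: intv_def)
    then have "ereal t < ereal c" using x_step[OF jZ] c by (metis less_trans)
    then show "V \<le> Sk j t" unfolding Sk_def V_def
      by (intro SUP_upper) (use c in auto)
  qed simp
  moreover have "Int_ab (\<lambda>t. u t * V) (x (j - 1)) (x j) = ennreal (2 powr real_of_int (j - 1)) * V"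
    using Int_ab_multc[OF u_meas] mass_prev[OF jZ] by simp
  moreover have "ennreal (2 powr real_of_int j) = 2 * ennreal (2 powr real_of_int (j - 1))"
  proof -
    have "(2::real) powr real_of_int j = 2 * 2 powr real_of_int (j - 1)"
      by (simp add: powr_mult_base)
    then show ?thesis by (simp add: ennreal_mult)
  qed
  ultimately show ?thesis using EV
    by (metis mult.assoc mult_left_mono zero_le)
qed

lemma R2d: assumes jZ: "j \<in> Z"
  shows "ennreal (2 powr real_of_int j) * epow (Dj j) p
     \<le> ennreal (2 powr (q * p) * 2 powr p) * (ennreal (2 powr real_of_int j) * epow (Ak j) p + 2 * Bt j)"
proof -
  have "epow (Dj j) p = ennreal ((2 powr q) powr p) * epow (Ak j + Ej j) p"
    unfolding Dj_def using p_pos by (intro epow_cmult) auto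
  also have "\<dots> \<le> ennreal (2 powr (q * p)) * (ennreal (2 powr p) * (epow (Ak j) p + epow (Ej j) p))"
    using p_pos by (simp add: powr_powr) (intro mult_left_mono epow_add_le, auto)
  finally have 1: "ennreal (2 powr real_of_int j) * epow (Dj j) p
      \<le> ennreal (2 powr (q * p) * 2 powr p) * (ennreal (2 powr real_of_int j) * epow (Ak j) p + ennreal (2 powr real_of_int j) * epow (Ej j) p)"
    by (simp add: ennreal_mult mult.assoc mult.left_commute distrib_left)
      (metis (no_types, lifting) distrib_left mult.left_commute mult_left_mono zero_le)
  also have "\<dots> \<le> ennreal (2 powr (q * p) * 2 powr p) * (ennreal (2 powr real_of_int j) * epow (Ak j) p + 2 * Bt j)"
    by (intro mult_left_mono add_left_mono R2c[OF jZ]) auto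
  finally show ?thesis .
qed

end


definition "Kh (p::real) = (1/(1 - 2 powr (-(1/(2*p))))) powr p * (1/(1 - 2 powr (-(1/2))))"
definition "Kall q r = Kh (r/q) * (2 powr r * 2 powr (r/q)) * 2"
definition "C1 q r = (Kall q r) powr (1/r) * 2 powr (1/r)"
definition "C2 (r::real) = 2 powr (1/r) + 1"

lemma Kh_nonneg: "p > 0 \<Longrightarrow> Kh p \<ge> 0"
  unfolding Kh_def using two_powr_neg[of "1/(2*p)"] two_powr_neg[of "1/2"] by auto

context L begin

definition "SA = (\<integral>\<^sup>+k. ennreal (2 powr real_of_int k) * epow (Ak k) p \<partial>count_space Z)"
definition "SB = (\<integral>\<^sup>+k. Bt k \<partial>count_space Z)"
definition "II = Int_ab Phi 0 \<infinity>"

lemma SA_le: "SA \<le> 2 * II"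
proof -
  have "SA \<le> (\<integral>\<^sup>+k. 2 * Int_ab Phi (x (k - 1)) (x k) \<partial>count_space Z)"
    unfolding SA_def
  proof (intro nn_integral_mono)
    fix k assume "k \<in> space (count_space Z)"
    then have kZ: "k \<in> Z" by simp
    have "ennreal (2 powr real_of_int k) * epow (Ak k) p \<le> ennreal (2 powr real_of_int k) * epow (Fe (x k)) p"
      using p_pos by (intro mult_left_mono epow_mono Ak_le) auto
    also have "\<dots> \<le> 2 * Int_ab Phi (x (k - 1)) (x k)" by (rule R1a[OF kZ])
    finally show "ennreal (2 powr real_of_int k) * epow (Ak k) p \<le> 2 * Int_ab Phi (x (k - 1)) (x k)" .
  qed
  also have "\<dots> = 2 * (\<integral>\<^sup>+k. Int_ab Phi (x (k - 1)) (x k) \<partial>count_space Z)"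
    by (rule nn_integral_cmult) simp
  also have "\<dots> \<le> 2 * II"
    unfolding II_def by (intro mult_left_mono disjoint_sum Phi_meas) auto
  finally show ?thesis .
qed

lemma SB_le: "SB \<le> II"
proof -
  have "SB \<le> (\<integral>\<^sup>+k. Int_ab Phi (x (k - 1)) (x k) \<partial>count_space Z)"
    unfolding SB_def by (intro nn_integral_mono R1b)
  also have "\<dots> \<le> II"
    unfolding II_def by (intro disjoint_sum Phi_meas)
  finally show ?thesis .
qed

lemma II_le: "II \<le> ennreal (Kall q r) * (SA + SB)"
proof -
  define c where "c = 2 powr (q * p) * 2 powr p"
  have c: "c = 2 powr r * 2 powr (r/q)" unfolding c_def using qp by (simp add: p_def)
  have "II \<le> (\<integral>\<^sup>+k. ennreal (2 powr real_of_int k) * epow (Fe (x k)) p \<partial>count_space Z)"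
    unfolding II_def by (rule R2a)
  also have "\<dots> \<le> (\<integral>\<^sup>+k. ennreal (2 powr real_of_int k) * epow (\<integral>\<^sup>+j. Dj j \<partial>count_space {j\<in>Z. k \<le> j}) p \<partial>count_space Z)"
    using p_pos by (intro nn_integral_mono mult_left_mono epow_mono R2b) auto
  also have "\<dots> \<le> ennreal (Kh p) * (\<integral>\<^sup>+j. ennreal (2 powr real_of_int j) * epow (Dj j) p \<partial>count_space Z)"
    unfolding Kh_def by (rule hardy[OF p_pos])
  also have "(\<integral>\<^sup>+j. ennreal (2 powr real_of_int j) * epow (Dj j) p \<partial>count_space Z)
      \<le> (\<integral>\<^sup>+j. ennreal c * (ennreal (2 powr real_of_int j) * epow (Ak j) p + 2 * Bt j) \<partial>count_space Z)"
    unfolding c_def by (intro nn_integral_mono R2d) auto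
  also have "\<dots> = ennreal c * (SA + 2 * SB)"
    unfolding SA_def SB_def
    by (subst nn_integral_cmult) (auto simp: nn_integral_add nn_integral_cmult)
  also have "\<dots> \<le> ennreal c * (2 * (SA + SB))"
  proof (intro mult_left_mono)
    have "SA \<le> 2 * SA" by (simp add: mult_2 add_increasing2)
    then show "SA + 2 * SB \<le> 2 * (SA + SB)" by (simp add: distrib_left add_right_mono)
  qed simp
  finally have "II \<le> ennreal (Kh p) * (ennreal c * (2 * (SA + SB)))"
    by (meson mult_left_mono zero_le)
  also have "\<dots> = ennreal (Kall q r) * (SA + SB)"
    unfolding Kall_def c[symmetric] using Kh_nonneg[OF p_pos] p_pos
    by (simp add: ennreal_mult mult.assoc p_def c_def)
  finally show ?thesis .
qed

end


context L begin

lemma final1: "epow II (1/r) \<le> ennreal (C1 q r) * (epow SA (1/r) + epow SB (1/r))"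
proof -
  have r1: "1/r > 0" using r by simp
  have K0: "Kall q r \<ge> 0" unfolding Kall_def using Kh_nonneg[of "r/q"] q r by simp
  have "epow II (1/r) \<le> epow (ennreal (Kall q r) * (SA + SB)) (1/r)"
    using r1 II_le by (rule epow_mono)
  also have "\<dots> = ennreal (Kall q r powr (1/r)) * epow (SA + SB) (1/r)"
    using r1 K0 by (rule epow_cmult)
  also have "\<dots> \<le> ennreal (Kall q r powr (1/r)) * (ennreal (2 powr (1/r)) * (epow SA (1/r) + epow SB (1/r)))"
    by (intro mult_left_mono epow_add_le r1) auto
  also have "\<dots> = ennreal (C1 q r) * (epow SA (1/r) + epow SB (1/r))"
    unfolding C1_def by (simp add: ennreal_mult mult.assoc)
  finally show ?thesis .
qed

lemma final2: "epow SA (1/r) + epow SB (1/r) \<le> ennreal (C2 r) * epow II (1/r)"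
proof -
  have r1: "1/r > 0" using r by simp
  have "epow SA (1/r) \<le> epow (ennreal 2 * II) (1/r)"
    using r1 SA_le by (intro epow_mono) auto
  also have "\<dots> = ennreal (2 powr (1/r)) * epow II (1/r)"
    using r1 by (intro epow_cmult) auto
  finally have 1: "epow SA (1/r) \<le> ennreal (2 powr (1/r)) * epow II (1/r)" .
  have 2: "epow SB (1/r) \<le> epow II (1/r)"
    using r1 SB_le by (intro epow_mono) auto
  have "epow SA (1/r) + epow SB (1/r) \<le> ennreal (2 powr (1/r)) * epow II (1/r) + epow II (1/r)"
    using 1 2 by (rule add_mono)
  also have "\<dots> = ennreal (C2 r) * epow II (1/r)"
    unfolding C2_def by (subst ennreal_plus) (auto simp: distrib_right)
  finally show ?thesis .
qed

end

lemma cov_L: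
  assumes q: "0 < q" and r: "0 < r" and wu: "weight u" and ww: "weight w"
    and cov: "covering_seq u x Z" and hm: "h \<in> borel_measurable lebesgue"
  shows "L q r u w h x Z"
proof -
  have um: "u \<in> borel_measurable lebesgue" and upos: "\<And>y. y > 0 \<Longrightarrow> 0 < Int_ab u 0 (ereal y) \<and> Int_ab u 0 (ereal y) < \<infinity>"
    using wu unfolding weight_def by auto
  have wm: "w \<in> borel_measurable lebesgue" using ww unfolding weight_def by auto
  have xr: "\<exists>c>0. x k = ereal c" if "0 < x k" "x k < \<infinity>" for k
    using that by (cases "x k") auto
  show ?thesis
  proof (cases "Int_ab u 0 \<infinity> = \<infinity>")
    case True
    then have Z: "Z = UNIV" and xs: "\<And>k. 0 < x k \<and> x k < \<infinity> \<and> Int_ab u 0 (x k) = ennreal (2 powr real_of_int k)"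
      using cov unfolding covering_seq_def by auto
    show ?thesis
      by unfold_locales (use q r um wm hm upos Z xs xr in auto)
  next
    case False
    then obtain M :: int where M: "ennreal (2 powr real_of_int M) \<le> Int_ab u 0 \<infinity>"
       "Int_ab u 0 \<infinity> < ennreal (2 powr real_of_int (M + 1))" "Z = {..M}"
       "\<And>k. k \<le> M \<Longrightarrow> 0 < x k \<and> x k < \<infinity> \<and> Int_ab u 0 (x k) = ennreal (2 powr real_of_int k)"
       "x (M + 1) = \<infinity>"
      using cov unfolding covering_seq_def by auto
    show ?thesis
    proof unfold_locales
      fix k assume "k \<in> Z" "k + 1 \<notin> Z"
      then have "k = M" using M(3) by auto
      then show "x (k + 1) = \<infinity> \<and> Int_ab u 0 \<infinity> < ennreal (2 powr real_of_int (k + 1))"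
        using M by simp
    qed (use q r um wm hm upos M xr in auto)
  qed
qed

theorem lemma4p3:
  fixes q r :: real
  assumes "0 < q" and "0 < r"
  shows "\<exists>C::real. 0 < C \<and>
    (\<forall>(u::real \<Rightarrow> ennreal) (w::real \<Rightarrow> ennreal) (x::int \<Rightarrow> ereal) (Z::int set) (h::real \<Rightarrow> ennreal).
       weight u \<longrightarrow> weight w \<longrightarrow> covering_seq u x Z \<longrightarrow> h \<in> borel_measurable lebesgue \<longrightarrow>
       (let LHS = epow (Int_ab (\<lambda>y. epow (Int_ab (\<lambda>t. epow (Int_ab h (ereal t) \<infinity>) q * w t)
                                            (ereal y) \<infinity>) (r / q) * u y) 0 \<infinity>) (1 / r);
            RHS = lr_norm r Z (\<lambda>k. ennreal (2 powr (real_of_int k / r)) *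
                      epow (Int_ab (\<lambda>s. epow (Int_ab h (ereal s) (x (k + 1))) q * w s)
                              (x k) (x (k + 1))) (1 / q))
                + lr_norm r Z (\<lambda>k. epow (Int_ab (\<lambda>t. u t *
                      (SUP s\<in>{s. ereal t < ereal s \<and> ereal s \<le> x (k + 1)}.
                         epow (Int_ab w (x k) (ereal s)) (r / q) * epow (Int_ab h (ereal s) \<infinity>) r))
                      (x (k - 1)) (x k)) (1 / r))
        in LHS \<le> ennreal C * RHS \<and> RHS \<le> ennreal C * LHS))"
proof (intro exI[of _ "max (C1 q r) (C2 r)"] conjI allI impI)
  have "0 < C2 r" unfolding C2_def by (simp add: add_pos_nonneg)
  then show "0 < max (C1 q r) (C2 r)" by (simp add: less_max_iff_disj)
next
  fix u w :: "real \<Rightarrow> ennreal" and x :: "int \<Rightarrow> ereal" and Z :: "int set" and h :: "real \<Rightarrow> ennreal"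
  assume wu: "weight u" and ww: "weight w" and cov: "covering_seq u x Z" and hm: "h \<in> borel_measurable lebesgue"
  interpret L q r u w h x Z using cov_L[OF assms wu ww cov hm] .
  have LHS: "epow (Int_ab (\<lambda>y. epow (Int_ab (\<lambda>t. epow (Int_ab h (ereal t) \<infinity>) q * w t)
                                            (ereal y) \<infinity>) (r / q) * u y) 0 \<infinity>) (1 / r) = epow II (1/r)"
    unfolding II_def Phi_def[abs_def] Fe_def Gf_def[abs_def] He_def p_def ..
  have RA: "lr_norm r Z (\<lambda>k. ennreal (2 powr (real_of_int k / r)) *
                      epow (Int_ab (\<lambda>s. epow (Int_ab h (ereal s) (x (k + 1))) q * w s)
                              (x k) (x (k + 1))) (1 / q)) = epow SA (1/r)"
    unfolding lr_norm_def SA_def infsum_nn Ak_def[symmetric] a_pow ..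
  have RB: "lr_norm r Z (\<lambda>k. epow (Int_ab (\<lambda>t. u t *
                      (SUP s\<in>{s. ereal t < ereal s \<and> ereal s \<le> x (k + 1)}.
                         epow (Int_ab w (x k) (ereal s)) (r / q) * epow (Int_ab h (ereal s) \<infinity>) r))
                      (x (k - 1)) (x k)) (1 / r)) = epow SB (1/r)"
  proof -
    have "\<And>k. Int_ab (\<lambda>t. u t *
                      (SUP s\<in>{s. ereal t < ereal s \<and> ereal s \<le> x (k + 1)}.
                         epow (Int_ab w (x k) (ereal s)) (r / q) * epow (Int_ab h (ereal s) \<infinity>) r))
                      (x (k - 1)) (x k) = Bt k"
      unfolding Bt_def Sk_def He_def ..
    then show ?thesis
      unfolding lr_norm_def SB_def infsum_nn using epow_inv'[OF r] by simp
  qed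
  have C1: "ennreal (C1 q r) \<le> ennreal (max (C1 q r) (C2 r))" and C2: "ennreal (C2 r) \<le> ennreal (max (C1 q r) (C2 r))"
    by (auto intro: ennreal_leI)
  show "let LHS = epow (Int_ab (\<lambda>y. epow (Int_ab (\<lambda>t. epow (Int_ab h (ereal t) \<infinity>) q * w t)
                                            (ereal y) \<infinity>) (r / q) * u y) 0 \<infinity>) (1 / r);
            RHS = lr_norm r Z (\<lambda>k. ennreal (2 powr (real_of_int k / r)) *
                      epow (Int_ab (\<lambda>s. epow (Int_ab h (ereal s) (x (k + 1))) q * w s)
                              (x k) (x (k + 1))) (1 / q))
                + lr_norm r Z (\<lambda>k. epow (Int_ab (\<lambda>t. u t *
                      (SUP s\<in>{s. ereal t < ereal s \<and> ereal s \<le> x (k + 1)}.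
                         epow (Int_ab w (x k) (ereal s)) (r / q) * epow (Int_ab h (ereal s) \<infinity>) r))
                      (x (k - 1)) (x k)) (1 / r))
        in LHS \<le> ennreal (max (C1 q r) (C2 r)) * RHS \<and> RHS \<le> ennreal (max (C1 q r) (C2 r)) * LHS"
    unfolding Let_def LHS RA RB
  proof
    show "epow II (1/r) \<le> ennreal (max (C1 q r) (C2 r)) * (epow SA (1/r) + epow SB (1/r))"
      using final1 C1 by (meson mult_right_mono order_trans zero_le)
    show "epow SA (1/r) + epow SB (1/r) \<le> ennreal (max (C1 q r) (C2 r)) * epow II (1/r)"
      using final2 C2 by (meson mult_right_mono order_trans zero_le)
  qed
qed


end
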